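(* Let $-A$ be the generator of a $C_0$-semigroup $(T(t))_{t\ge0}$ on a Banach space $X$. Suppose there exist $\alpha,\beta\in\mathbb N_0$, $\eta\in\rho(-A)$ and a sequence $(t_n)_{n\in\mathbb N}\subseteq[0,\infty)$ such that \[ \lim_{n\to\infty}\|T(t_n)A^\alpha(\eta+A)^{-\alpha-\beta}\|_{\mathcal L(X)}=0. \] Then $\overline{\mathbb C_-}\setminus\{0\}\subseteq\rho(A)$.
   Context: All Banach spaces are complex; $\mathbb C_-=\{\lambda\in\mathbb C:\Re\lambda<0\}$. *)

theory Defs
  imports "HOL-Analysis.Analysis"
begin

class complex_banach = banach +
  fixes cscale :: "complex \<Rightarrow> 'a \<Rightarrow> 'a"
  assumes cscale_of_real: "cscale (complex_of_real r) x = r *\<^sub>R x"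
    and cscale_add_left: "cscale (a + b) x = cscale a x + cscale b x"
    and cscale_add_right: "cscale a (x + y) = cscale a x + cscale a y"
    and cscale_mult: "cscale (a * b) x = cscale a (cscale b x)"
    and norm_cscale: "norm (cscale a x) = cmod a * norm x"

definition bounded_clinear_op :: "('a::complex_banach \<Rightarrow> 'a) \<Rightarrow> bool" where
  "bounded_clinear_op f \<longleftrightarrow> bounded_linear f \<and> (\<forall>c x. f (cscale c x) = cscale c (f x))"

definition C0_semigroup :: "(real \<Rightarrow> 'a::complex_banach \<Rightarrow> 'a) \<Rightarrow> bool" where
  "C0_semigroup T \<longleftrightarrow>
     (\<forall>t\<ge>0. bounded_clinear_op (T t)) \<and> T 0 = id \<and>
     (\<forall>s\<ge>0. \<forall>t\<ge>0. T (s + t) = T s \<circ> T t) \<and>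
     (\<forall>x. ((\<lambda>t. T t x) \<longlongrightarrow> x) (at_right 0))"

definition gen_dom :: "(real \<Rightarrow> 'a::real_normed_vector \<Rightarrow> 'a) \<Rightarrow> 'a set" where
  "gen_dom T = {x. \<exists>y. ((\<lambda>h. (1 / h) *\<^sub>R (T h x - x)) \<longlongrightarrow> y) (at_right 0)}"

definition gen :: "(real \<Rightarrow> 'a::real_normed_vector \<Rightarrow> 'a) \<Rightarrow> 'a \<Rightarrow> 'a" where
  "gen T x = Lim (at_right 0) (\<lambda>h. (1 / h) *\<^sub>R (T h x - x))"

definition resolvent :: "'a set \<Rightarrow> ('a::complex_banach \<Rightarrow> 'a) \<Rightarrow> complex \<Rightarrow> 'a \<Rightarrow> 'a" where
  "resolvent D B l = the_inv_into D (\<lambda>x. cscale l x - B x)"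

definition resolvent_set :: "'a set \<Rightarrow> ('a::complex_banach \<Rightarrow> 'a) \<Rightarrow> complex set" where
  "resolvent_set D B = {l. bij_betw (\<lambda>x. cscale l x - B x) D UNIV \<and>
                             bounded_clinear_op (resolvent D B l)}"

end

theory Submission
  imports Defs
begin


lemma cscale_type_fix: "cscale a (x::'a::complex_banach) = cscale a x" ..

lemma cscale_zero_left[simp]: "cscale 0 x = 0"
  using cscale_of_real[of 0 x] by simp
lemma cscale_one[simp]: "cscale 1 x = x"
  using cscale_of_real[of 1 x] by simp
lemma cscale_zero_right[simp]: "cscale a 0 = 0"
  using cscale_add_right[of a 0 0] by simp
lemma cscale_minus_right: "cscale a (- x) = - cscale a x"
  using cscale_add_right[of a x "-x"] by (simp add: eq_neg_iff_add_eq_0 add.commute)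
lemma cscale_diff_right: "cscale a (x - y) = cscale a x - cscale a y"
  using cscale_add_right[of a x "-y"] cscale_minus_right by simp
lemma cscale_minus_left: "cscale (- a) x = - cscale a x"
  using cscale_add_left[of a "-a" x] by (simp add: eq_neg_iff_add_eq_0 add.commute)
lemma cscale_diff_left: "cscale (a - b) x = cscale a x - cscale b x"
  using cscale_add_left[of a "-b" x] cscale_minus_left by simp
lemma cscale_scaleR_right: "cscale a (r *\<^sub>R x) = r *\<^sub>R cscale a x"
  by (metis cscale_mult cscale_of_real mult.commute)
lemma cscale_scaleR_left: "cscale (r *\<^sub>R a) x = r *\<^sub>R cscale a x"
  by (metis cscale_mult cscale_of_real scaleR_conv_of_real)
lemma cscale_comm: "cscale a (cscale b x) = cscale b (cscale a x)"
  by (metis cscale_mult mult.commute)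
lemma bounded_linear_cscale: "bounded_linear (cscale a)"
  by (rule bounded_linear_intro[where K="cmod a"])
     (auto simp: cscale_add_right cscale_scaleR_right norm_cscale)
lemma bounded_bilinear_cscale: "bounded_bilinear cscale"
  by (rule bounded_bilinear.intro)
    (auto simp: cscale_add_right cscale_add_left cscale_scaleR_right cscale_scaleR_left norm_cscale
       intro!: exI[of _ 1])
lemma cscale_sum_right: "cscale a (sum f A) = (\<Sum>i\<in>A. cscale a (f i))"
  by (rule linear_sum[OF bounded_linear.linear[OF bounded_linear_cscale]])

lemma bclin_id: "bounded_clinear_op id"
  by (simp add: bounded_clinear_op_def bounded_linear_ident[unfolded id_def] id_def)
lemma bclin_id': "bounded_clinear_op (\<lambda>x. x)"
  using bclin_id by (simp add: id_def)
lemma bclin_zero: "bounded_clinear_op (\<lambda>x. 0)"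
  by (simp add: bounded_clinear_op_def bounded_linear_zero)
lemma bclin_comp: "bounded_clinear_op f \<Longrightarrow> bounded_clinear_op g \<Longrightarrow> bounded_clinear_op (\<lambda>x. f (g x))"
  unfolding bounded_clinear_op_def using bounded_linear_compose by auto
lemma bclin_add: "bounded_clinear_op f \<Longrightarrow> bounded_clinear_op g \<Longrightarrow> bounded_clinear_op (\<lambda>x. f x + g x)"
  unfolding bounded_clinear_op_def using bounded_linear_add by (auto simp: cscale_add_right)
lemma bclin_diff: "bounded_clinear_op f \<Longrightarrow> bounded_clinear_op g \<Longrightarrow> bounded_clinear_op (\<lambda>x. f x - g x)"
  unfolding bounded_clinear_op_def using bounded_linear_sub by (auto simp: cscale_diff_right)
lemma bclin_cscale: "bounded_clinear_op f \<Longrightarrow> bounded_clinear_op (\<lambda>x. cscale a (f x))"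
  unfolding bounded_clinear_op_def
  using bounded_linear_compose[OF bounded_linear_cscale] by (auto simp: cscale_comm)
lemma bclin_cscale': "bounded_clinear_op (cscale a :: 'a::complex_banach \<Rightarrow> 'a)"
  using bclin_cscale[OF bclin_id', of a] by simp
lemma bclin_funpow: "bounded_clinear_op f \<Longrightarrow> bounded_clinear_op (f ^^ n)"
proof (induction n)
  case 0 then show ?case using bclin_id' by simp
next
  case (Suc n) then show ?case using bclin_comp[of f "f^^n"] by (simp add: comp_def)
qed
lemma bclin_linear: "bounded_clinear_op f \<Longrightarrow> bounded_linear f"
  by (simp add: bounded_clinear_op_def)
lemma bclin_cscale_comm: "bounded_clinear_op f \<Longrightarrow> f (cscale a x) = cscale a (f x)"
  by (simp add: bounded_clinear_op_def)
lemma bclin_add_comm: "bounded_clinear_op f \<Longrightarrow> f (x + y) = f x + f y"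
  by (simp add: bounded_clinear_op_def linear_simps)
lemma bclin_diff_comm: "bounded_clinear_op f \<Longrightarrow> f (x - y) = f x - f y"
  by (simp add: bounded_clinear_op_def linear_simps)
lemma bclin_zero_comm: "bounded_clinear_op f \<Longrightarrow> f 0 = 0"
  by (simp add: bounded_clinear_op_def linear_simps)
lemma bclin_bound: "bounded_clinear_op f \<Longrightarrow> \<exists>K>0. \<forall>x. norm (f x) \<le> K * norm x"
  unfolding bounded_clinear_op_def using bounded_linear.pos_bounded by (metis mult.commute)




lemma banach_steinhaus:
  fixes F :: "nat \<Rightarrow> 'a::banach \<Rightarrow> 'b::real_normed_vector"
  assumes lin: "\<And>n. bounded_linear (F n)"
    and pw: "\<And>x. \<exists>C. \<forall>n. norm (F n x) \<le> C"
  shows "\<exists>C. \<forall>n x. norm (F n x) \<le> C * norm x"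
proof -
  define E where "E k = {x. \<forall>n. norm (F n x) \<le> real k}" for k :: nat
  have clE: "closed (E k)" for k
  proof -
    have "E k = (\<Inter>n. {x. norm (F n x) \<le> real k})" by (auto simp: E_def)
    moreover have "closed {x. norm (F n x) \<le> real k}" for n
      by (intro closed_Collect_le continuous_intros bounded_linear.continuous_on[OF lin]) 
    ultimately show ?thesis by auto
  qed
  have unE0: "x \<in> (\<Union>k. E k)" for x
  proof -
    obtain C where "\<forall>n. norm (F n x) \<le> C" using pw by blast
    moreover obtain k where "C \<le> real k" using real_arch_simple by blast
    ultimately have "x \<in> E k" unfolding E_def using order_trans by blast
    then show "x \<in> (\<Union>k. E k)" by blast
  qed
  then have unE: "(\<Union>k. E k) = UNIV" by blast
  have "\<exists>k. interior (E k) \<noteq> {}"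
  proof (rule ccontr)
    assume "\<not> ?thesis"
    have "euclidean interior_of \<Union>(range E) = {}"
      apply (rule Baire_category_alt)
      apply (rule disjI1, rule completely_metrizable_space_euclidean)
      apply simp
      apply (clarsimp simp: closed_closedin[symmetric] clE)
      using \<open>\<not> (\<exists>k. interior (E k) \<noteq> {})\<close> by blast
    then have "interior (UNIV::'a set) = {}" using unE by simp
    then show False by simp
  qed
  then obtain k x0 where "x0 \<in> interior (E k)" by blast
  then obtain r where r: "r > 0" "ball x0 r \<subseteq> E k"
    using open_contains_ball_eq open_interior interior_subset by (metis subset_trans)
  have x0: "x0 \<in> E k" using r by auto
  have "norm (F n y) \<le> (4 * real k / r) * norm y" for n y
  proof (cases "y = 0")
    case True then show ?thesis using lin[of n] by (simp add: linear_simps)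
  next
    case False
    define z where "z = (r / 2 / norm y) *\<^sub>R y"
    have nz: "norm z = r / 2" using False r by (simp add: z_def)
    then have "x0 + z \<in> E k" using r by (auto simp: dist_norm intro!: subsetD[OF r(2)])
    then have a: "norm (F n (x0 + z)) \<le> real k" by (simp add: E_def)
    have b: "norm (F n x0) \<le> real k" using x0 by (simp add: E_def)
    have "F n z = F n (x0 + z) - F n x0" using lin[of n] by (simp add: linear_simps)
    then have nFz: "norm (F n z) \<le> 2 * real k" using a b norm_triangle_ineq4[of "F n (x0+z)" "F n x0"] by simp
    have "y = (2 * norm y / r) *\<^sub>R z" using False r by (simp add: z_def)
    then have "F n y = (2 * norm y / r) *\<^sub>R F n z" using lin[of n] by (metis linear_simps(5))
    then have "norm (F n y) = (2 * norm y / r) * norm (F n z)" using r by simp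
    also have "\<dots> \<le> (2 * norm y / r) * (2 * real k)"
      using nFz r by (intro mult_left_mono) auto
    finally show ?thesis by (simp add: field_simps)
  qed
  then show ?thesis by blast
qed

lemma sg_bclin: "C0_semigroup T \<Longrightarrow> t \<ge> 0 \<Longrightarrow> bounded_clinear_op (T t)"
  by (simp add: C0_semigroup_def)
lemma sg_0: "C0_semigroup T \<Longrightarrow> T 0 x = x"
  by (simp add: C0_semigroup_def)
lemma sg_add: "C0_semigroup T \<Longrightarrow> s \<ge> 0 \<Longrightarrow> t \<ge> 0 \<Longrightarrow> T (s + t) x = T s (T t x)"
  by (simp add: C0_semigroup_def)
lemma sg_cont0: "C0_semigroup T \<Longrightarrow> ((\<lambda>t. T t x) \<longlongrightarrow> x) (at_right 0)"
  by (simp add: C0_semigroup_def)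

lemma sg_small: 
  assumes "C0_semigroup T" "e > 0"
  shows "\<exists>d>0. \<forall>h. 0 \<le> h \<and> h < d \<longrightarrow> norm (T h x - x) < e"
proof -
  have "eventually (\<lambda>t. dist (T t x) x < e) (at_right 0)"
    using sg_cont0[OF assms(1), of x] assms(2) tendstoD by blast
  then obtain b where b: "b > 0" "\<forall>y>0. y < b \<longrightarrow> dist (T y x) x < e"
    unfolding eventually_at_right_field by auto
  show ?thesis
  proof (intro exI[of _ b] conjI allI impI)
    fix h assume h: "0 \<le> h \<and> h < b"
    show "norm (T h x - x) < e"
    proof (cases "h = 0")
      case True then show ?thesis using sg_0[OF assms(1)] assms(2) by simp
    next
      case False then show ?thesis using b h by (simp add: dist_norm)
    qed
  qed fact
qed

lemma sg_local_bound:
  fixes T :: "real \<Rightarrow> 'a::complex_banach \<Rightarrow> 'a"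
  assumes C0: "C0_semigroup T"
  shows "\<exists>d>0. \<exists>M. \<forall>s x. 0 \<le> s \<and> s \<le> d \<longrightarrow> norm (T s x) \<le> M * norm x"
proof (rule ccontr)
  assume neg: "\<not> ?thesis"
  have "\<exists>s x. 0 \<le> s \<and> s \<le> 1 / (real n + 1) \<and> norm (T s x) > real n * norm x" for n :: nat
  proof -
    have pos: "1 / (real n + 1) > 0" by simp
    from neg pos have "\<not> (\<forall>s x. 0 \<le> s \<and> s \<le> 1 / (real n + 1) \<longrightarrow> norm (T s x) \<le> real n * norm x)"
      by blast
    then show ?thesis by (auto simp: not_le)
  qed
  then obtain h xs where hx: "\<And>n. 0 \<le> h n \<and> h n \<le> 1 / (real n + 1) \<and> norm (T (h n) (xs n)) > real n * norm (xs n)"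
    by metis
  have lin: "bounded_linear (T (h n))" for n
    using sg_bclin[OF C0] hx bclin_linear by blast
  have pw: "\<exists>C. \<forall>n. norm (T (h n) x) \<le> C" for x
  proof -
    have "(\<lambda>n. T (h n) x) \<longlonglongrightarrow> x"
    proof (rule LIMSEQ_I)
      fix e :: real assume "e > 0"
      obtain d where d: "d > 0" "\<forall>h. 0 \<le> h \<and> h < d \<longrightarrow> norm (T h x - x) < e"
        using sg_small[OF C0 \<open>e > 0\<close>] by blast
      obtain N where N: "1 / d < real N" using reals_Archimedean2 by blast
      show "\<exists>no. \<forall>n\<ge>no. norm (T (h n) x - x) < e"
      proof (intro exI allI impI)
        fix n assume "N \<le> n"
        then have "1 / d < real n + 1" using N by linarith
        then have "1 / (real n + 1) < d" using d(1)
        proof -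
          have "1 < (real n + 1) * d" using \<open>1 / d < real n + 1\<close> d(1) by (simp add: divide_less_eq)
          then show ?thesis by (simp add: divide_less_eq mult.commute)
        qed
        then have "h n < d" using hx[of n] by linarith
        then show "norm (T (h n) x - x) < e" using d hx[of n] by blast
      qed
    qed
    then have "bounded (range (\<lambda>n. T (h n) x))" by (rule convergent_imp_bounded)
    then show ?thesis unfolding bounded_iff by auto
  qed
  obtain C where C: "\<And>n x. norm (T (h n) x) \<le> C * norm x"
    using banach_steinhaus[OF lin pw] by blast
  obtain n :: nat where n: "C < real n" using reals_Archimedean2 by blast
  have "real n * norm (xs n) < C * norm (xs n)"
    using hx[of n] C[of n "xs n"] by linarith
  moreover have "C * norm (xs n) \<le> real n * norm (xs n)"
    using n by (intro mult_right_mono) auto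
  ultimately show False by linarith
qed

lemma sg_bound:
  fixes T :: "real \<Rightarrow> 'a::complex_banach \<Rightarrow> 'a"
  assumes C0: "C0_semigroup T"
  shows "\<exists>M\<ge>1. \<forall>s x. 0 \<le> s \<and> s \<le> \<tau> \<longrightarrow> norm (T s x) \<le> M * norm x"
proof -
  obtain d M0 where d: "d > 0" and M0: "\<And>s x. 0 \<le> s \<Longrightarrow> s \<le> d \<Longrightarrow> norm (T s x) \<le> M0 * norm x"
    using sg_local_bound[OF C0] by blast
  define M1 where "M1 = max 1 M0"
  have M1: "M1 \<ge> 1" by (simp add: M1_def)
  have M1b: "norm (T s x) \<le> M1 * norm x" if "0 \<le> s" "s \<le> d" for s x
    using M0[OF that, of x] by (smt (verit) M1_def mult_right_mono norm_ge_zero)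
  have P: "\<forall>s x. 0 \<le> s \<and> s \<le> real (Suc k) * d \<longrightarrow> norm (T s x) \<le> M1 ^ (Suc k) * norm x" for k
  proof (induction k)
    case 0 then show ?case using M1b by simp
  next
    case (Suc k)
    show ?case
    proof (intro allI impI)
      fix s x assume s: "0 \<le> s \<and> s \<le> real (Suc (Suc k)) * d"
      show "norm (T s x) \<le> M1 ^ Suc (Suc k) * norm x"
      proof (cases "s \<le> d")
        case True
        then have "norm (T s x) \<le> M1 * norm x" using M1b s by blast
        also have "\<dots> \<le> M1 ^ Suc (Suc k) * norm x"
          using M1 by (intro mult_right_mono) (auto simp: power_increasing[of 1 "Suc (Suc k)" M1, simplified])
        finally show ?thesis .
      next
        case False
        have eq: "T s x = T d (T (s - d) x)" using sg_add[OF C0, of d "s - d" x] False d by simp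
        have "s - d \<le> real (Suc k) * d" using s by (simp add: algebra_simps)
        then have "norm (T (s - d) x) \<le> M1 ^ Suc k * norm x" using Suc False by auto
        then have "norm (T d (T (s - d) x)) \<le> M1 * (M1 ^ Suc k * norm x)"
          using M1b[of d "T (s - d) x"] d M1 by (smt (verit) mult_left_mono)
        then show ?thesis using eq by (simp add: mult.assoc)
      qed
    qed
  qed
  obtain k :: nat where k: "\<tau> / d \<le> real k" using real_arch_simple by blast
  then have "\<tau> \<le> real (Suc k) * d" using d by (simp add: divide_le_eq algebra_simps)
  then have "\<forall>s x. 0 \<le> s \<and> s \<le> \<tau> \<longrightarrow> norm (T s x) \<le> M1 ^ (Suc k) * norm x"
    using P[of k] by auto
  moreover have "M1 ^ Suc k \<ge> 1" by (rule one_le_power[OF M1])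
  ultimately show ?thesis by blast
qed

lemma sg_diff_bound:
  fixes T :: "real \<Rightarrow> 'a::complex_banach \<Rightarrow> 'a"
  assumes C0: "C0_semigroup T" and M: "\<forall>s x. 0 \<le> s \<and> s \<le> \<tau> \<longrightarrow> norm (T s x) \<le> M * norm x"
    and u: "0 \<le> u" "u \<le> \<tau>" and s: "0 \<le> s" "s \<le> \<tau>"
  shows "norm (T u x - T s x) \<le> M * norm (T \<bar>u - s\<bar> x - x)"
proof (cases "s \<le> u")
  case True
  have "T u x = T s (T (u - s) x)" using sg_add[OF C0, of s "u - s" x] True s by simp
  then have "T u x - T s x = T s (T (u - s) x - x)"
    using bclin_diff_comm[OF sg_bclin[OF C0 s(1)]] by simp
  then show ?thesis using M s True by (simp add: abs_if)
next
  case False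
  have "T s x = T u (T (s - u) x)" using sg_add[OF C0, of u "s - u" x] False u by simp
  then have "T u x - T s x = - T u (T (s - u) x - x)"
    using bclin_diff_comm[OF sg_bclin[OF C0 u(1)]] by simp
  then have "norm (T u x - T s x) = norm (T u (T (s - u) x - x))" by (metis norm_minus_cancel)
  then show ?thesis using M u False by (simp add: abs_if)
qed

lemma sg_continuous_on:
  fixes T :: "real \<Rightarrow> 'a::complex_banach \<Rightarrow> 'a"
  assumes C0: "C0_semigroup T"
  shows "continuous_on {0..\<tau>} (\<lambda>s. T s x)"
proof -
  obtain M where M1: "M \<ge> 1" and M: "\<forall>s x. 0 \<le> s \<and> s \<le> \<tau> \<longrightarrow> norm (T s x) \<le> M * norm x"
    using sg_bound[OF C0] by blast
  show ?thesis unfolding continuous_on_iff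
  proof (intro ballI allI impI)
    fix s e assume s: "s \<in> {0..\<tau>}" and e: "(e::real) > 0"
    obtain d where d: "d > 0" "\<forall>h. 0 \<le> h \<and> h < d \<longrightarrow> norm (T h x - x) < e / M"
      using sg_small[OF C0, of "e / M" x] e M1 by auto
    show "\<exists>d>0. \<forall>u\<in>{0..\<tau>}. dist u s < d \<longrightarrow> dist (T u x) (T s x) < e"
    proof (intro exI[of _ d] conjI ballI impI)
      fix u assume u: "u \<in> {0..\<tau>}" "dist u s < d"
      have "norm (T u x - T s x) \<le> M * norm (T \<bar>u - s\<bar> x - x)"
        using sg_diff_bound[OF C0 M, of u s x] u s by auto
      also have "\<dots> < M * (e / M)"
        using d u M1 by (intro mult_strict_left_mono) (auto simp: dist_real_def)
      finally show "dist (T u x) (T s x) < e" using M1 by (simp add: dist_norm)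
    qed fact
  qed
qed




lemma gen_intro:
  assumes "((\<lambda>h. (1 / h) *\<^sub>R (T h x - x)) \<longlongrightarrow> y) (at_right (0::real))"
  shows "x \<in> gen_dom T" "gen T x = y"
proof -
  show "x \<in> gen_dom T" using assms by (auto simp: gen_dom_def)
  show "gen T x = y" unfolding gen_def using assms by (intro tendsto_Lim) auto
qed

lemma gen_lim:
  assumes "x \<in> gen_dom T"
  shows "((\<lambda>h. (1 / h) *\<^sub>R (T h x - x)) \<longlongrightarrow> gen T x) (at_right (0::real))"
proof -
  obtain y where y: "((\<lambda>h. (1 / h) *\<^sub>R (T h x - x)) \<longlongrightarrow> y) (at_right (0::real))"
    using assms by (auto simp: gen_dom_def)
  then show ?thesis using gen_intro(2)[of T x y] by simp
qed

lemma ev_pos: "eventually (\<lambda>h::real. 0 < h) (at_right 0)"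
  by (rule eventually_at_right_less)

lemma gen_add:
  fixes T :: "real \<Rightarrow> 'a::complex_banach \<Rightarrow> 'a"
  assumes C0: "C0_semigroup T" and x: "x \<in> gen_dom T" and y: "y \<in> gen_dom T"
  shows "x + y \<in> gen_dom T" "gen T (x + y) = gen T x + gen T y"
proof -
  have lim: "((\<lambda>h. (1 / h) *\<^sub>R (T h x - x) + (1 / h) *\<^sub>R (T h y - y)) \<longlongrightarrow> gen T x + gen T y) (at_right 0)"
    by (intro tendsto_add gen_lim x y)
  have ev: "eventually (\<lambda>h. (1 / h) *\<^sub>R (T h x - x) + (1 / h) *\<^sub>R (T h y - y) = (1 / h) *\<^sub>R (T h (x + y) - (x + y))) (at_right 0)"
    using ev_pos
  proof (rule eventually_mono)
    fix h :: real assume "0 < h"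
    then have "T h (x + y) = T h x + T h y" using bclin_add_comm[OF sg_bclin[OF C0]] by simp
    then show "(1 / h) *\<^sub>R (T h x - x) + (1 / h) *\<^sub>R (T h y - y) = (1 / h) *\<^sub>R (T h (x + y) - (x + y))"
      by (simp add: algebra_simps)
  qed
  have "((\<lambda>h. (1 / h) *\<^sub>R (T h (x + y) - (x + y))) \<longlongrightarrow> gen T x + gen T y) (at_right 0)"
    using Lim_transform_eventually[OF lim ev] .
  then show "x + y \<in> gen_dom T" "gen T (x + y) = gen T x + gen T y" using gen_intro by blast+
qed

lemma gen_cscale:
  fixes T :: "real \<Rightarrow> 'a::complex_banach \<Rightarrow> 'a"
  assumes C0: "C0_semigroup T" and x: "x \<in> gen_dom T"
  shows "cscale c x \<in> gen_dom T" "gen T (cscale c x) = cscale c (gen T x)"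
proof -
  have lim: "((\<lambda>h. cscale c ((1 / h) *\<^sub>R (T h x - x))) \<longlongrightarrow> cscale c (gen T x)) (at_right 0)"
    by (intro bounded_linear.tendsto[OF bounded_linear_cscale] gen_lim x)
  have ev: "eventually (\<lambda>h. cscale c ((1 / h) *\<^sub>R (T h x - x)) = (1 / h) *\<^sub>R (T h (cscale c x) - cscale c x)) (at_right 0)"
    using ev_pos
  proof (rule eventually_mono)
    fix h :: real assume "0 < h"
    then have "T h (cscale c x) = cscale c (T h x)" using bclin_cscale_comm[OF sg_bclin[OF C0]] by simp
    then show "cscale c ((1 / h) *\<^sub>R (T h x - x)) = (1 / h) *\<^sub>R (T h (cscale c x) - cscale c x)"
      by (simp add: cscale_scaleR_right cscale_diff_right)
  qed
  have "((\<lambda>h. (1 / h) *\<^sub>R (T h (cscale c x) - cscale c x)) \<longlongrightarrow> cscale c (gen T x)) (at_right 0)"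
    using Lim_transform_eventually[OF lim ev] .
  then show "cscale c x \<in> gen_dom T" "gen T (cscale c x) = cscale c (gen T x)" using gen_intro by blast+
qed

lemma gen_T:
  fixes T :: "real \<Rightarrow> 'a::complex_banach \<Rightarrow> 'a"
  assumes C0: "C0_semigroup T" and x: "x \<in> gen_dom T" and s: "s \<ge> 0"
  shows "T s x \<in> gen_dom T" "gen T (T s x) = T s (gen T x)"
proof -
  have bl: "bounded_linear (T s)" using sg_bclin[OF C0 s] bclin_linear by blast
  have lim: "((\<lambda>h. T s ((1 / h) *\<^sub>R (T h x - x))) \<longlongrightarrow> T s (gen T x)) (at_right 0)"
    by (intro bounded_linear.tendsto[OF bl] gen_lim x)
  have ev: "eventually (\<lambda>h. T s ((1 / h) *\<^sub>R (T h x - x)) = (1 / h) *\<^sub>R (T h (T s x) - T s x)) (at_right 0)"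
    using ev_pos
  proof (rule eventually_mono)
    fix h :: real assume h: "0 < h"
    have "T h (T s x) = T (h + s) x" using sg_add[OF C0, of h s x] h s by simp
    also have "\<dots> = T s (T h x)" using sg_add[OF C0, of s h x] h s by (simp add: add.commute)
    finally show "T s ((1 / h) *\<^sub>R (T h x - x)) = (1 / h) *\<^sub>R (T h (T s x) - T s x)"
      using bl by (simp add: linear_simps)
  qed
  have "((\<lambda>h. (1 / h) *\<^sub>R (T h (T s x) - T s x)) \<longlongrightarrow> T s (gen T x)) (at_right 0)"
    using Lim_transform_eventually[OF lim ev] .
  then show "T s x \<in> gen_dom T" "gen T (T s x) = T s (gen T x)" using gen_intro by blast+
qed

lemma gen_zero:
  fixes T :: "real \<Rightarrow> 'a::complex_banach \<Rightarrow> 'a"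
  assumes C0: "C0_semigroup T"
  shows "0 \<in> gen_dom T" "gen T 0 = 0"
proof -
  have "((\<lambda>h. (1 / h) *\<^sub>R (T h 0 - 0)) \<longlongrightarrow> 0) (at_right (0::real))"
  proof (rule Lim_transform_eventually[OF tendsto_const])
    show "eventually (\<lambda>h. 0 = (1 / h) *\<^sub>R (T h 0 - 0)) (at_right (0::real))"
      using ev_pos by (rule eventually_mono) (simp add: bclin_zero_comm[OF sg_bclin[OF C0]])
  qed
  then show "0 \<in> gen_dom T" "gen T 0 = 0" using gen_intro by blast+
qed

lemma gen_neg:
  fixes T :: "real \<Rightarrow> 'a::complex_banach \<Rightarrow> 'a"
  assumes C0: "C0_semigroup T" and x: "x \<in> gen_dom T"
  shows "- x \<in> gen_dom T" "gen T (- x) = - gen T x"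
  using gen_cscale[OF C0 x, of "-1"] by (simp_all add: cscale_minus_left)

lemma gen_diff:
  fixes T :: "real \<Rightarrow> 'a::complex_banach \<Rightarrow> 'a"
  assumes C0: "C0_semigroup T" and x: "x \<in> gen_dom T" and y: "y \<in> gen_dom T"
  shows "x - y \<in> gen_dom T" "gen T (x - y) = gen T x - gen T y"
  using gen_add[OF C0 x gen_neg(1)[OF C0 y]] gen_neg[OF C0 y] by simp_all

lemma res_props:
  assumes "l \<in> resolvent_set D B"
  shows "resolvent D B l y \<in> D"
    "cscale l (resolvent D B l y) - B (resolvent D B l y) = y"
    "x \<in> D \<Longrightarrow> resolvent D B l (cscale l x - B x) = x"
    "bounded_clinear_op (resolvent D B l)"
proof -
  have bij: "bij_betw (\<lambda>x. cscale l x - B x) D UNIV" using assms by (simp add: resolvent_set_def)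
  then have inj: "inj_on (\<lambda>x. cscale l x - B x) D" and im: "(\<lambda>x. cscale l x - B x) ` D = UNIV"
    by (auto simp: bij_betw_def)
  show "resolvent D B l y \<in> D" unfolding resolvent_def
    using the_inv_into_into[OF inj, of y D] im by auto
  show "cscale l (resolvent D B l y) - B (resolvent D B l y) = y" unfolding resolvent_def
    using f_the_inv_into_f[OF inj, of y] im by auto
  show "x \<in> D \<Longrightarrow> resolvent D B l (cscale l x - B x) = x" unfolding resolvent_def
    using the_inv_into_f_f[OF inj] by auto
  show "bounded_clinear_op (resolvent D B l)" using assms by (simp add: resolvent_set_def)
qed

lemma sg_deriv:
  fixes T :: "real \<Rightarrow> 'a::complex_banach \<Rightarrow> 'a"
  assumes C0: "C0_semigroup T" and x: "x \<in> gen_dom T" and s: "0 \<le> s" "s \<le> \<tau>"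
  shows "((\<lambda>u. T u x) has_vector_derivative T s (gen T x)) (at s within {0..\<tau>})"
  unfolding has_vector_derivative_def has_derivative_within_alt
proof (intro conjI allI impI bounded_linear_scaleR_left)
  fix e :: real assume e: "e > 0"
  obtain M where M1: "M \<ge> 1" and M: "\<forall>s x. 0 \<le> s \<and> s \<le> \<tau> \<longrightarrow> norm (T s x) \<le> M * norm x"
    using sg_bound[OF C0] by blast
  let ?g = "gen T x"
  have "eventually (\<lambda>h. dist ((1 / h) *\<^sub>R (T h x - x)) ?g < e / (2 * M)) (at_right 0)"
    using gen_lim[OF x] e M1 tendstoD by fastforce
  then obtain d1 where d1: "d1 > 0" "\<And>h. 0 < h \<Longrightarrow> h < d1 \<Longrightarrow> dist ((1 / h) *\<^sub>R (T h x - x)) ?g < e / (2 * M)"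
    unfolding eventually_at_right_field by auto
  have H: "norm (T h x - x - h *\<^sub>R ?g) \<le> e / (2 * M) * h" if h: "0 < h" "h < d1" for h
  proof -
    have "T h x - x - h *\<^sub>R ?g = h *\<^sub>R ((1 / h) *\<^sub>R (T h x - x) - ?g)"
      using h by (simp add: algebra_simps)
    then have "norm (T h x - x - h *\<^sub>R ?g) = h * dist ((1 / h) *\<^sub>R (T h x - x)) ?g"
      using h by (simp add: dist_norm)
    also have "\<dots> \<le> h * (e / (2 * M))" using d1(2)[OF h] h by (intro mult_left_mono) auto
    finally show ?thesis by (simp add: mult.commute)
  qed
  have "continuous_on {0..\<tau>} (\<lambda>u. T u ?g)" by (rule sg_continuous_on[OF C0])
  then obtain d2 where d2: "d2 > 0" "\<And>u. u \<in> {0..\<tau>} \<Longrightarrow> dist u s < d2 \<Longrightarrow> dist (T u ?g) (T s ?g) < e / 2"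
    unfolding continuous_on_iff using s e by (metis atLeastAtMost_iff half_gt_zero)
  show "\<exists>d>0. \<forall>u\<in>{0..\<tau>}. norm (u - s) < d \<longrightarrow> norm (T u x - T s x - (u - s) *\<^sub>R T s ?g) \<le> e * norm (u - s)"
  proof (intro exI[of _ "min d1 d2"] conjI ballI impI)
    show "min d1 d2 > 0" using d1 d2 by simp
    fix u assume u: "u \<in> {0..\<tau>}" and ud: "norm (u - s) < min d1 d2"
    consider "u = s" | "s < u" | "u < s" by linarith
    then show "norm (T u x - T s x - (u - s) *\<^sub>R T s ?g) \<le> e * norm (u - s)"
    proof cases
      case 1 then show ?thesis by simp
    next
      case 2
      define h where "h = u - s"
      have h: "0 < h" "h < d1" using 2 ud by (auto simp: h_def)
      have blS: "bounded_linear (T s)" using sg_bclin[OF C0 s(1)] bclin_linear by blast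
      have "T u x = T s (T h x)" using sg_add[OF C0, of s h x] h s by (simp add: h_def)
      then have eq: "T u x - T s x - (u - s) *\<^sub>R T s ?g = T s (T h x - x - h *\<^sub>R ?g)"
        using blS by (simp add: linear_simps h_def)
      have "norm (T s (T h x - x - h *\<^sub>R ?g)) \<le> M * norm (T h x - x - h *\<^sub>R ?g)"
        using M s by blast
      also have "\<dots> \<le> M * (e / (2 * M) * h)" using H[OF h] M1 by (intro mult_left_mono) auto
      also have "\<dots> = e / 2 * h" using M1 by (simp add: field_simps)
      also have "\<dots> \<le> e * norm (u - s)" using h e by (simp add: h_def)
      finally show ?thesis using eq by simp
    next
      case 3
      define h where "h = s - u"
      have h: "0 < h" "h < d1" using 3 ud by (auto simp: h_def)
      have blU: "bounded_linear (T u)" using sg_bclin[OF C0] u bclin_linear by auto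
      have "T s x = T u (T h x)" using sg_add[OF C0, of u h x] h u by (simp add: h_def)
      then have eq: "T u x - T s x - (u - s) *\<^sub>R T s ?g
           = h *\<^sub>R (T s ?g - T u ?g) - T u (T h x - x - h *\<^sub>R ?g)"
        using blU by (simp add: linear_simps h_def algebra_simps)
      have n1: "norm (T u (T h x - x - h *\<^sub>R ?g)) \<le> e / 2 * h"
      proof -
        have "norm (T u (T h x - x - h *\<^sub>R ?g)) \<le> M * norm (T h x - x - h *\<^sub>R ?g)"
          using M u by auto
        also have "\<dots> \<le> M * (e / (2 * M) * h)" using H[OF h] M1 by (intro mult_left_mono) auto
        also have "\<dots> = e / 2 * h" using M1 by (simp add: field_simps)
        finally show ?thesis .
      qed
      have n2: "norm (h *\<^sub>R (T s ?g - T u ?g)) \<le> e / 2 * h"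
      proof -
        have "dist (T u ?g) (T s ?g) < e / 2" using d2(2)[OF u] ud by (simp add: dist_norm)
        then have "norm (T s ?g - T u ?g) \<le> e / 2" by (simp add: dist_norm norm_minus_commute)
        then show ?thesis using h by (simp add: mult.commute mult_left_mono)
      qed
      have "norm (T u x - T s x - (u - s) *\<^sub>R T s ?g) \<le> e / 2 * h + e / 2 * h"
        unfolding eq using norm_triangle_ineq4[of "h *\<^sub>R (T s ?g - T u ?g)" "T u (T h x - x - h *\<^sub>R ?g)"] n1 n2 by linarith
      then show ?thesis using h by (simp add: h_def)
    qed
  qed
qed




definition Bop :: "(real \<Rightarrow> 'a::complex_banach \<Rightarrow> 'a) \<Rightarrow> complex \<Rightarrow> real \<Rightarrow> 'a \<Rightarrow> 'a" where
  "Bop T \<mu> t y = integral {0..t} (\<lambda>s. cscale (exp (\<mu> * of_real (t - s))) (T s y))"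

lemma Bop_cont:
  fixes T :: "real \<Rightarrow> 'a::complex_banach \<Rightarrow> 'a"
  assumes C0: "C0_semigroup T"
  shows "continuous_on {0..t} (\<lambda>s. cscale (exp (\<mu> * of_real (t - s))) (T s y))"
  by (intro bounded_bilinear.continuous_on[OF bounded_bilinear_cscale] continuous_intros sg_continuous_on[OF C0])

lemma Bop_has_integral:
  fixes T :: "real \<Rightarrow> 'a::complex_banach \<Rightarrow> 'a"
  assumes C0: "C0_semigroup T"
  shows "((\<lambda>s. cscale (exp (\<mu> * of_real (t - s))) (T s y)) has_integral Bop T \<mu> t y) {0..t}"
  unfolding Bop_def by (intro integrable_integral integrable_continuous_real Bop_cont[OF C0])

lemma Bop_add:
  fixes T :: "real \<Rightarrow> 'a::complex_banach \<Rightarrow> 'a"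
  assumes C0: "C0_semigroup T" and t: "t \<ge> 0"
  shows "Bop T \<mu> t (y + z) = Bop T \<mu> t y + Bop T \<mu> t z"
proof -
  have "((\<lambda>s. cscale (exp (\<mu> * of_real (t - s))) (T s y) + cscale (exp (\<mu> * of_real (t - s))) (T s z))
        has_integral Bop T \<mu> t y + Bop T \<mu> t z) {0..t}"
    by (intro has_integral_add Bop_has_integral[OF C0])
  moreover have "((\<lambda>s. cscale (exp (\<mu> * of_real (t - s))) (T s y) + cscale (exp (\<mu> * of_real (t - s))) (T s z))
        has_integral Bop T \<mu> t (y + z)) {0..t}"
    using Bop_has_integral[OF C0, of \<mu> t "y + z"]
    by (rule has_integral_eq[rotated]) (auto simp: bclin_add_comm[OF sg_bclin[OF C0]] cscale_add_right)
  ultimately show ?thesis using has_integral_unique by blast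
qed

lemma Bop_cscale:
  fixes T :: "real \<Rightarrow> 'a::complex_banach \<Rightarrow> 'a"
  assumes C0: "C0_semigroup T"
  shows "Bop T \<mu> t (cscale c y) = cscale c (Bop T \<mu> t y)"
proof -
  have "((cscale c \<circ> (\<lambda>s. cscale (exp (\<mu> * of_real (t - s))) (T s y))) has_integral cscale c (Bop T \<mu> t y)) {0..t}"
    by (intro has_integral_linear Bop_has_integral[OF C0] bounded_linear_cscale)
  moreover have "((cscale c \<circ> (\<lambda>s. cscale (exp (\<mu> * of_real (t - s))) (T s y))) has_integral Bop T \<mu> t (cscale c y)) {0..t}"
    using Bop_has_integral[OF C0, of \<mu> t "cscale c y"]
    by (rule has_integral_eq[rotated]) (auto simp: bclin_cscale_comm[OF sg_bclin[OF C0]] cscale_comm)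
  ultimately show ?thesis using has_integral_unique by blast
qed

lemma Bop_bound:
  fixes T :: "real \<Rightarrow> 'a::complex_banach \<Rightarrow> 'a"
  assumes C0: "C0_semigroup T" and t: "t \<ge> 0"
  shows "\<exists>K. \<forall>y. norm (Bop T \<mu> t y) \<le> K * norm y"
proof -
  obtain M where M1: "M \<ge> 1" and M: "\<forall>s x. 0 \<le> s \<and> s \<le> t \<longrightarrow> norm (T s x) \<le> M * norm x"
    using sg_bound[OF C0] by blast
  have "norm (Bop T \<mu> t y) \<le> (exp (cmod \<mu> * t) * M * norm y) * t" for y
  proof -
    have "norm (Bop T \<mu> t y) \<le> (exp (cmod \<mu> * t) * M * norm y) * Henstock_Kurzweil_Integration.content (cbox 0 t)"
    proof (rule has_integral_bound)
      show "((\<lambda>s. cscale (exp (\<mu> * of_real (t - s))) (T s y)) has_integral Bop T \<mu> t y) (cbox 0 t)"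
        using Bop_has_integral[OF C0, of \<mu> t y] by (simp add: cbox_interval)
      show "0 \<le> exp (cmod \<mu> * t) * M * norm y" using M1 by simp
      fix s assume "s \<in> cbox 0 t"
      then have s: "0 \<le> s" "s \<le> t" by auto
      have "Re (\<mu> * of_real (t - s)) \<le> cmod \<mu> * t"
      proof -
        have "Re (\<mu> * of_real (t - s)) = Re \<mu> * (t - s)" by simp
        also have "\<dots> \<le> cmod \<mu> * (t - s)" using s by (intro mult_right_mono) (auto simp: complex_Re_le_cmod)
        also have "\<dots> \<le> cmod \<mu> * t" using s by (intro mult_left_mono) auto
        finally show ?thesis .
      qed
      then have e: "cmod (exp (\<mu> * of_real (t - s))) \<le> exp (cmod \<mu> * t)" by (simp add: norm_exp_eq_Re)
      have "norm (cscale (exp (\<mu> * of_real (t - s))) (T s y)) = cmod (exp (\<mu> * of_real (t - s))) * norm (T s y)"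
        by (simp add: norm_cscale)
      also have "\<dots> \<le> exp (cmod \<mu> * t) * (M * norm y)"
        using e M s by (intro mult_mono) auto
      finally show "norm (cscale (exp (\<mu> * of_real (t - s))) (T s y)) \<le> exp (cmod \<mu> * t) * M * norm y"
        by (simp add: mult.assoc)
    qed
    then show ?thesis using t by simp
  qed
  then show ?thesis by (metis mult.commute mult.left_commute)
qed

lemma Bop_bclin:
  fixes T :: "real \<Rightarrow> 'a::complex_banach \<Rightarrow> 'a"
  assumes C0: "C0_semigroup T" and t: "t \<ge> 0"
  shows "bounded_clinear_op (Bop T \<mu> t)"
proof -
  obtain K where K: "\<And>y. norm (Bop T \<mu> t y) \<le> K * norm y" using Bop_bound[OF C0 t] by blast
  have "bounded_linear (Bop T \<mu> t)"
  proof (rule bounded_linear_intro[where K=K])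
    show "Bop T \<mu> t (x + y) = Bop T \<mu> t x + Bop T \<mu> t y" for x y by (rule Bop_add[OF C0 t])
    show "Bop T \<mu> t (r *\<^sub>R x) = r *\<^sub>R Bop T \<mu> t x" for r x
      using Bop_cscale[OF C0, of \<mu> t "of_real r" x] by (simp add: cscale_of_real)
    show "norm (Bop T \<mu> t x) \<le> norm x * K" for x using K[of x] by (simp add: mult.commute)
  qed
  then show ?thesis unfolding bounded_clinear_op_def using Bop_cscale[OF C0] by blast
qed

lemma Bop_comm:
  fixes T :: "real \<Rightarrow> 'a::complex_banach \<Rightarrow> 'a"
  assumes C0: "C0_semigroup T" and K: "bounded_clinear_op K" and comm: "\<And>s y. s \<ge> 0 \<Longrightarrow> K (T s y) = T s (K y)"
  shows "K (Bop T \<mu> t y) = Bop T \<mu> t (K y)"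
proof -
  have "((K \<circ> (\<lambda>s. cscale (exp (\<mu> * of_real (t - s))) (T s y))) has_integral K (Bop T \<mu> t y)) {0..t}"
    by (intro has_integral_linear Bop_has_integral[OF C0] bclin_linear[OF K])
  moreover have "((K \<circ> (\<lambda>s. cscale (exp (\<mu> * of_real (t - s))) (T s y))) has_integral Bop T \<mu> t (K y)) {0..t}"
    using Bop_has_integral[OF C0, of \<mu> t "K y"]
    by (rule has_integral_eq[rotated]) (auto simp: bclin_cscale_comm[OF K] comm)
  ultimately show ?thesis using has_integral_unique by blast
qed

lemma Bop_gen:
  fixes T :: "real \<Rightarrow> 'a::complex_banach \<Rightarrow> 'a"
  assumes C0: "C0_semigroup T" and t: "t \<ge> 0" and x: "x \<in> gen_dom T"
  shows "Bop T \<mu> t (cscale \<mu> x - gen T x) = cscale (exp (\<mu> * of_real t)) x - T t x"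
proof -
  define f where "f s = cscale (exp (\<mu> * of_real (t - s))) (T s x)" for s
  define f' where "f' s = cscale (exp (\<mu> * of_real (t - s))) (T s (gen T x))
      + cscale (- \<mu> * exp (\<mu> * of_real (t - s))) (T s x)" for s
  have d: "(f has_vector_derivative f' s) (at s within {0..t})" if s: "s \<in> {0..t}" for s
  proof -
    have e: "((\<lambda>s. exp (\<mu> * of_real (t - s))) has_vector_derivative (- \<mu> * exp (\<mu> * of_real (t - s)))) (at s within {0..t})"
    proof -
      have "((\<lambda>z. exp (\<mu> * (of_real t - z))) has_field_derivative (- \<mu> * exp (\<mu> * (of_real t - of_real s)))) (at (of_real s))"
        by (auto intro!: derivative_eq_intros)
      from has_vector_derivative_real_field[OF this, where s="{0..t}"] show ?thesis by simp
    qed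
    have Td: "((\<lambda>u. T u x) has_vector_derivative T s (gen T x)) (at s within {0..t})"
      using sg_deriv[OF C0 x, of s t] s by auto
    show ?thesis unfolding f_def f'_def
      using bounded_bilinear.has_vector_derivative[OF bounded_bilinear_cscale e Td] by simp
  qed
  have "(f' has_integral (f t - f 0)) {0..t}"
    by (rule fundamental_theorem_of_calculus[OF t d])
  moreover have "f t - f 0 = T t x - cscale (exp (\<mu> * of_real t)) x"
    unfolding f_def using sg_0[OF C0] by simp
  moreover have "f' s = - cscale (exp (\<mu> * of_real (t - s))) (T s (cscale \<mu> x - gen T x))" if "s \<in> {0..t}" for s
  proof -
    have "T s (cscale \<mu> x - gen T x) = cscale \<mu> (T s x) - T s (gen T x)"
      using that by (simp add: bclin_diff_comm[OF sg_bclin[OF C0]] bclin_cscale_comm[OF sg_bclin[OF C0]])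
    then show ?thesis unfolding f'_def
      by (simp add: cscale_diff_right cscale_minus_left cscale_mult[symmetric] mult.commute)
  qed
  ultimately have "((\<lambda>s. - cscale (exp (\<mu> * of_real (t - s))) (T s (cscale \<mu> x - gen T x))) has_integral
      (T t x - cscale (exp (\<mu> * of_real t)) x)) {0..t}"
    using has_integral_eq[of "{0..t}" f' "\<lambda>s. - cscale (exp (\<mu> * of_real (t - s))) (T s (cscale \<mu> x - gen T x))"] by simp
  from has_integral_neg[OF this] have "((\<lambda>s. cscale (exp (\<mu> * of_real (t - s))) (T s (cscale \<mu> x - gen T x))) has_integral
      - (T t x - cscale (exp (\<mu> * of_real t)) x)) {0..t}"
    by simp
  then show ?thesis using has_integral_unique[OF _ Bop_has_integral[OF C0]] by simp
qed




locale SG =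
  fixes T :: "real \<Rightarrow> 'a::complex_banach \<Rightarrow> 'a" and \<eta> :: complex
  assumes C0: "C0_semigroup T" and eta: "\<eta> \<in> resolvent_set (gen_dom T) (gen T)"
begin

abbreviation "D \<equiv> gen_dom T"
abbreviation "G \<equiv> gen T"
abbreviation "R \<equiv> resolvent (gen_dom T) (gen T) \<eta>"
definition "L \<mu> x = cscale \<mu> x - G x"

lemma R_in: "R y \<in> D" using res_props(1)[OF eta] .
lemma R_eq: "cscale \<eta> (R y) - G (R y) = y" using res_props(2)[OF eta] .
lemma R_left: "x \<in> D \<Longrightarrow> R (cscale \<eta> x - G x) = x" using res_props(3)[OF eta] .
lemma R_bcl: "bounded_clinear_op R" using res_props(4)[OF eta] .
lemma GR: "G (R y) = cscale \<eta> (R y) - y" using R_eq[of y] by (simp add: algebra_simps)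

lemma D_add: "x \<in> D \<Longrightarrow> y \<in> D \<Longrightarrow> x + y \<in> D" using gen_add[OF C0] by blast
lemma D_diff: "x \<in> D \<Longrightarrow> y \<in> D \<Longrightarrow> x - y \<in> D" using gen_diff[OF C0] by blast
lemma D_cscale: "x \<in> D \<Longrightarrow> cscale c x \<in> D" using gen_cscale[OF C0] by blast
lemma D_zero: "0 \<in> D" using gen_zero[OF C0] by blast
lemma G_add: "x \<in> D \<Longrightarrow> y \<in> D \<Longrightarrow> G (x + y) = G x + G y" using gen_add[OF C0] by blast
lemma G_diff: "x \<in> D \<Longrightarrow> y \<in> D \<Longrightarrow> G (x - y) = G x - G y" using gen_diff[OF C0] by blast
lemma G_cscale: "x \<in> D \<Longrightarrow> G (cscale c x) = cscale c (G x)" using gen_cscale[OF C0] by blast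
lemma G_zero: "G 0 = 0" using gen_zero[OF C0] by blast

lemma L_add: "x \<in> D \<Longrightarrow> y \<in> D \<Longrightarrow> L \<mu> (x + y) = L \<mu> x + L \<mu> y"
  by (simp add: L_def G_add cscale_add_right algebra_simps)
lemma L_diff: "x \<in> D \<Longrightarrow> y \<in> D \<Longrightarrow> L \<mu> (x - y) = L \<mu> x - L \<mu> y"
  by (simp add: L_def G_diff cscale_diff_right algebra_simps)
lemma L_cscale: "x \<in> D \<Longrightarrow> L \<mu> (cscale c x) = cscale c (L \<mu> x)"
  by (simp add: L_def G_cscale cscale_diff_right cscale_comm)
lemma L_zero: "L \<mu> 0 = 0" by (simp add: L_def G_zero)

lemma R_T: "s \<ge> 0 \<Longrightarrow> R (T s y) = T s (R y)"
proof -
  assume s: "s \<ge> 0"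
  have Ts: "bounded_clinear_op (T s)" using sg_bclin[OF C0 s] .
  have "cscale \<eta> (T s (R y)) - G (T s (R y)) = T s (cscale \<eta> (R y) - G (R y))"
    using gen_T[OF C0 R_in s] by (simp add: bclin_diff_comm[OF Ts] bclin_cscale_comm[OF Ts])
  then have "cscale \<eta> (T s (R y)) - G (T s (R y)) = T s y" by (simp add: R_eq)
  then show "R (T s y) = T s (R y)" using R_left[OF gen_T(1)[OF C0 R_in s]] by metis
qed

lemma B_dom:
  assumes t: "t \<ge> 0"
  shows "Bop T \<mu> t y \<in> D" "L \<mu> (Bop T \<mu> t y) = cscale (exp (\<mu> * of_real t)) y - T t y"
proof -
  let ?b = "Bop T \<mu> t y" and ?e = "exp (\<mu> * of_real t)"
  have Bb: "bounded_clinear_op (Bop T \<mu> t)" by (rule Bop_bclin[OF C0 t])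
  have Bc: "R (Bop T \<mu> t z) = Bop T \<mu> t (R z)" for z
    using Bop_comm[OF C0 R_bcl] R_T by blast
  have "Bop T \<mu> t (cscale \<mu> (R y) - G (R y)) = cscale ?e (R y) - T t (R y)"
    using Bop_gen[OF C0 t R_in] .
  moreover have "cscale \<mu> (R y) - G (R y) = cscale (\<mu> - \<eta>) (R y) + y"
    by (simp add: GR cscale_diff_left)
  ultimately have "Bop T \<mu> t (cscale (\<mu> - \<eta>) (R y)) + ?b = R (cscale ?e y - T t y)"
    by (simp add: bclin_add_comm[OF Bb] bclin_diff_comm[OF R_bcl] bclin_cscale_comm[OF R_bcl] R_T[OF t])
  then have "cscale (\<mu> - \<eta>) (R ?b) + ?b = R (cscale ?e y - T t y)"
    by (simp add: bclin_cscale_comm[OF Bb] Bc)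
  then have bq: "?b = R (cscale ?e y - T t y - cscale (\<mu> - \<eta>) ?b)"
    by (simp add: bclin_diff_comm[OF R_bcl] bclin_add_comm[OF R_bcl] bclin_cscale_comm[OF R_bcl] algebra_simps)
  show "?b \<in> D" by (subst bq) (rule R_in)
  have "L \<eta> ?b = cscale ?e y - T t y - cscale (\<mu> - \<eta>) ?b"
  proof -
    have "L \<eta> ?b = L \<eta> (R (cscale ?e y - T t y - cscale (\<mu> - \<eta>) ?b))" using bq by (rule arg_cong)
    then show ?thesis by (simp only: L_def R_eq)
  qed
  then show "L \<mu> ?b = cscale ?e y - T t y"
    by (simp add: L_def cscale_diff_left algebra_simps)
qed

definition fac :: "complex \<Rightarrow> complex \<Rightarrow> ('a \<Rightarrow> 'a) \<Rightarrow> bool" where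
  "fac \<mu> k K \<longleftrightarrow> bounded_clinear_op K \<and>
     (\<exists>W. bounded_clinear_op W \<and> (\<forall>y. W y \<in> D) \<and> (\<forall>y. cscale k y - K y = L \<mu> (W y)))"

lemma fac_id: "fac \<mu> 1 (\<lambda>y. y)"
  unfolding fac_def using bclin_id' bclin_zero D_zero L_zero by (intro conjI exI[of _ "\<lambda>y. 0"]) auto


lemma fac_comp:
  assumes "fac \<mu> k1 K1" "fac \<mu> k2 K2"
  shows "fac \<mu> (k1 * k2) (\<lambda>y. K1 (K2 y))"
proof -
  obtain W1 where K1: "bounded_clinear_op K1" and W1: "bounded_clinear_op W1" "\<forall>y. W1 y \<in> D" "\<forall>y. cscale k1 y - K1 y = L \<mu> (W1 y)"
    using assms(1) unfolding fac_def by blast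
  obtain W2 where K2: "bounded_clinear_op K2" and W2: "bounded_clinear_op W2" "\<forall>y. W2 y \<in> D" "\<forall>y. cscale k2 y - K2 y = L \<mu> (W2 y)"
    using assms(2) unfolding fac_def by blast
  define W where "W = (\<lambda>y. cscale k1 (W2 y) + W1 (K2 y))"
  have "cscale (k1 * k2) y - K1 (K2 y) = L \<mu> (W y)" for y
  proof -
    have "cscale (k1 * k2) y - K1 (K2 y) = cscale k1 (cscale k2 y - K2 y) + (cscale k1 (K2 y) - K1 (K2 y))"
      by (simp add: cscale_mult cscale_diff_right)
    also have "\<dots> = cscale k1 (L \<mu> (W2 y)) + L \<mu> (W1 (K2 y))" using W1(3) W2(3) by simp
    also have "\<dots> = L \<mu> (W y)" using W1(2) W2(2) by (simp add: W_def L_add L_cscale D_cscale)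
    finally show ?thesis .
  qed
  moreover have "bounded_clinear_op W" unfolding W_def using bclin_add[OF bclin_cscale[OF W2(1)] bclin_comp[OF W1(1) K2]] .
  moreover have "\<forall>y. W y \<in> D" using W1(2) W2(2) by (simp add: W_def D_add D_cscale)
  moreover have "bounded_clinear_op (\<lambda>y. K1 (K2 y))" using K1 K2 by (rule bclin_comp)
  ultimately show ?thesis unfolding fac_def by blast
qed

lemma fac_pow: "fac \<mu> k K \<Longrightarrow> fac \<mu> (k ^ n) (K ^^ n)"
proof (induction n)
  case 0 then show ?case using fac_id by (simp add: id_def)
next
  case (Suc n) then show ?case using fac_comp[of \<mu> k K "k ^ n" "K ^^ n"] by simp
qed

lemma fac_R:
  assumes "\<mu> \<noteq> \<eta>"
  shows "fac \<mu> (1 / (\<eta> - \<mu>)) R"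
proof -
  let ?r = "1 / (\<eta> - \<mu>)"
  have "cscale ?r y - R y = L \<mu> (cscale ?r (R y))" for y
  proof -
    have "L \<mu> (cscale ?r (R y)) = cscale ?r (L \<mu> (R y))" by (simp add: L_cscale R_in)
    also have "L \<mu> (R y) = cscale (\<mu> - \<eta>) (R y) + y" by (simp add: L_def GR cscale_diff_left)
    also have "cscale ?r (cscale (\<mu> - \<eta>) (R y) + y) = cscale (?r * (\<mu> - \<eta>)) (R y) + cscale ?r y"
      by (simp add: cscale_add_right cscale_mult[symmetric])
    also have "?r * (\<mu> - \<eta>) = -1" using assms by (simp add: field_simps)
    finally show ?thesis by (simp add: cscale_minus_left)
  qed
  moreover have "bounded_clinear_op (\<lambda>y. cscale ?r (R y))" by (rule bclin_cscale[OF R_bcl])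
  ultimately show ?thesis unfolding fac_def using R_bcl R_in D_cscale
    by (intro conjI exI[of _ "\<lambda>y. cscale ?r (R y)"]) auto
qed

definition "N y = y - cscale \<eta> (R y)"

lemma N_bcl: "bounded_clinear_op N"
  unfolding N_def[abs_def] by (rule bclin_diff[OF bclin_id' bclin_cscale[OF R_bcl]])

lemma fac_N:
  assumes "\<mu> \<noteq> \<eta>"
  shows "fac \<mu> (1 - \<eta> * (1 / (\<eta> - \<mu>))) N"
proof -
  let ?r = "1 / (\<eta> - \<mu>)"
  obtain W where W: "bounded_clinear_op W" "\<forall>y. W y \<in> D" "\<forall>y. cscale ?r y - R y = L \<mu> (W y)"
    using fac_R[OF assms] unfolding fac_def by blast
  have "cscale (1 - \<eta> * ?r) y - N y = L \<mu> (cscale (- \<eta>) (W y))" for y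
  proof -
    have "cscale (1 - \<eta> * ?r) y - N y = cscale (- \<eta>) (cscale ?r y - R y)"
      by (simp add: N_def cscale_diff_left cscale_diff_right cscale_mult[symmetric] cscale_minus_left)
    also have "\<dots> = L \<mu> (cscale (- \<eta>) (W y))" using W by (simp add: L_cscale)
    finally show ?thesis .
  qed
  moreover have "bounded_clinear_op (\<lambda>y. cscale (- \<eta>) (W y))" by (rule bclin_cscale[OF W(1)])
  ultimately show ?thesis unfolding fac_def using N_bcl W(2) D_cscale
    by (intro conjI exI[of _ "\<lambda>y. cscale (- \<eta>) (W y)"]) auto
qed

end




lemma neumann:
  fixes K :: "'a::complex_banach \<Rightarrow> 'a"
  assumes K: "bounded_clinear_op K" and Kb: "\<And>x. norm (K x) \<le> q * norm x"
    and q: "0 \<le> q" "q < cmod w"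
  shows "\<exists>V. bounded_clinear_op V \<and> (\<forall>y. cscale w (V y) - K (V y) = y)"
    and "\<And>x. cscale w x - K x = 0 \<Longrightarrow> x = 0"
proof -
  define M where "M x = cscale w x - K x" for x
  have w0: "w \<noteq> 0" using q by auto
  have lower: "(cmod w - q) * norm x \<le> norm (M x)" for x
  proof -
    have "norm (cscale w x) - norm (K x) \<le> norm (M x)" unfolding M_def by (rule norm_triangle_ineq2)
    moreover have "norm (cscale w x) = cmod w * norm x" by (simp add: norm_cscale)
    ultimately show ?thesis using Kb[of x] by (simp add: algebra_simps)
  qed
  have inj0: "M x = 0 \<Longrightarrow> x = 0" for x
  proof -
    assume "M x = 0"
    then have "(cmod w - q) * norm x \<le> 0" using lower[of x] by simp
    moreover have "cmod w - q > 0" using q by simp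
    ultimately have "norm x \<le> 0" by (simp add: mult_le_0_iff)
    then show "x = 0" by simp
  qed
  then show "\<And>x. cscale w x - K x = 0 \<Longrightarrow> x = 0" unfolding M_def by blast
  have M_add: "M (a + b) = M a + M b" for a b
    unfolding M_def by (simp add: bclin_add_comm[OF K] cscale_add_right algebra_simps)
  have M_cs: "M (cscale c a) = cscale c (M a)" for c a
    unfolding M_def by (simp add: bclin_cscale_comm[OF K] cscale_diff_right cscale_comm)
  have M_diff: "M (a - b) = M a - M b" for a b
    unfolding M_def by (simp add: bclin_diff_comm[OF K] cscale_diff_right algebra_simps)
  have Minj: "M a = M b \<Longrightarrow> a = b" for a b
    using inj0[of "a - b"] M_diff[of a b] by simp
  have surj: "\<exists>x. M x = y" for y
  proof -
    define f where "f x = cscale (1 / w) (y + K x)" for x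
    have "\<forall>x x'. dist (f x) (f x') \<le> (q / cmod w) * dist x x'"
    proof (intro allI)
      fix x x'
      have "f x - f x' = cscale (1 / w) (K (x - x'))"
        unfolding f_def by (simp add: bclin_diff_comm[OF K] cscale_diff_right[symmetric])
      then have "dist (f x) (f x') = norm (K (x - x')) / cmod w"
        by (simp add: dist_norm norm_cscale norm_divide)
      also have "\<dots> \<le> q * norm (x - x') / cmod w"
        using Kb[of "x - x'"] w0 by (simp add: divide_right_mono)
      finally show "dist (f x) (f x') \<le> (q / cmod w) * dist x x'" by (simp add: dist_norm)
    qed
    moreover have "0 \<le> q / cmod w" using q by auto
    moreover have "q / cmod w < 1" using q by (simp add: divide_less_eq)
    ultimately obtain x where "f x = x" using banach_fix_type[of "q / cmod w" f] by blast
    then have "cscale w (f x) = cscale w x" by simp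
    then have "y + K x = cscale w x" unfolding f_def using w0 by (simp add: cscale_mult[symmetric])
    then show ?thesis unfolding M_def by (intro exI[of _ x]) (simp add: algebra_simps)
  qed
  define V where "V y = (SOME x. M x = y)" for y
  have MV: "M (V y) = y" for y unfolding V_def using someI_ex[OF surj[of y]] .
  have V_add: "V (a + b) = V a + V b" for a b by (rule Minj) (simp add: MV M_add)
  have V_cs: "V (cscale c a) = cscale c (V a)" for c a by (rule Minj) (simp add: MV M_cs)
  have V_bd: "norm (V y) \<le> norm y * (1 / (cmod w - q))" for y
  proof -
    have "(cmod w - q) * norm (V y) \<le> norm y" using lower[of "V y"] MV[of y] by simp
    then show ?thesis using q by (simp add: field_simps)
  qed
  have "bounded_linear V"
  proof (rule bounded_linear_intro[where K="1 / (cmod w - q)"])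
    show "V (x + y) = V x + V y" for x y by (rule V_add)
    show "V (r *\<^sub>R x) = r *\<^sub>R V x" for r x using V_cs[of "of_real r" x] by (simp add: cscale_of_real)
    show "norm (V x) \<le> norm x * (1 / (cmod w - q))" for x by (rule V_bd)
  qed
  then have "bounded_clinear_op V" unfolding bounded_clinear_op_def using V_cs by blast
  then show "\<exists>V. bounded_clinear_op V \<and> (\<forall>y. cscale w (V y) - K (V y) = y)"
    using MV unfolding M_def by blast
qed

lemma res_intro:
  assumes inj: "inj_on (\<lambda>x. cscale l x - B x) D" and Z: "bounded_clinear_op Z"
    and ZD: "\<And>y. Z y \<in> D" and ZL: "\<And>y. cscale l (Z y) - B (Z y) = y"
  shows "l \<in> resolvent_set D B"
proof -
  let ?f = "\<lambda>x. cscale l x - B x"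
  have im: "?f ` D = UNIV"
  proof (rule set_eqI, rule iffI)
    fix y
    have "y = ?f (Z y)" using ZL[of y] by simp
    then show "y \<in> ?f ` D" using ZD[of y] by (rule image_eqI)
  qed simp
  have "resolvent D B l = Z"
  proof
    fix y
    have "resolvent D B l y = the_inv_into D ?f (?f (Z y))" unfolding resolvent_def using ZL[of y] by simp
    also have "\<dots> = Z y" by (rule the_inv_into_f_f[OF inj ZD])
    finally show "resolvent D B l y = Z y" .
  qed
  have "bij_betw ?f D UNIV" unfolding bij_betw_def using inj im by (rule conjI)
  then show ?thesis unfolding resolvent_set_def using Z \<open>resolvent D B l = Z\<close> by simp
qed

context SG begin

lemma negGR: "- G (R z) = N z" by (simp add: GR N_def)
lemma N_R: "N (R z) = R (N z)"
  by (simp add: N_def bclin_diff_comm[OF R_bcl] bclin_cscale_comm[OF R_bcl])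
lemma N_Rpow: "N ((R ^^ k) z) = (R ^^ k) (N z)"
  by (induction k arbitrary: z) (simp_all add: N_R)

lemma S_pow: "((\<lambda>y. - G y) ^^ k) ((R ^^ k) z) = (N ^^ k) z"
proof (induction k arbitrary: z)
  case 0 then show ?case by simp
next
  case (Suc k)
  have "((\<lambda>y. - G y) ^^ Suc k) ((R ^^ Suc k) z) = ((\<lambda>y. - G y) ^^ k) (- G (R ((R ^^ k) z)))"
    by (simp add: funpow_Suc_right funpow_swap1[of R] del: funpow.simps)
  also have "\<dots> = ((\<lambda>y. - G y) ^^ k) ((R ^^ k) (N z))" by (simp add: negGR N_Rpow)
  also have "\<dots> = (N ^^ k) (N z)" by (rule Suc.IH)
  also have "\<dots> = (N ^^ Suc k) z" by (simp add: funpow_Suc_right del: funpow.simps)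
  finally show ?case .
qed

lemma S_eq: "((\<lambda>y. - G y) ^^ \<alpha>) ((R ^^ (\<alpha> + \<beta>)) x) = (N ^^ \<alpha>) ((R ^^ \<beta>) x)"
  by (simp add: funpow_add S_pow)

end




context SG begin

lemma main_res:
  assumes Z: "bounded_clinear_op Z" and ZD: "\<And>y. Z y \<in> D" and ZL: "\<And>y. L \<mu> (Z y) = y"
    and inj: "\<And>x. x \<in> D \<Longrightarrow> L \<mu> x = 0 \<Longrightarrow> x = 0"
  shows "- \<mu> \<in> resolvent_set D (\<lambda>y. - G y)"
proof (rule res_intro)
  have eq: "cscale (- \<mu>) x - - G x = - L \<mu> x" for x by (simp add: L_def cscale_minus_left)
  show "inj_on (\<lambda>x. cscale (- \<mu>) x - - G x) D"
  proof (rule inj_onI)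
    fix x x' assume x: "x \<in> D" "x' \<in> D" and "cscale (- \<mu>) x - - G x = cscale (- \<mu>) x' - - G x'"
    then have "L \<mu> x = L \<mu> x'" unfolding eq by simp
    then have "L \<mu> (x - x') = 0" using x by (simp add: L_diff)
    then show "x = x'" using inj[OF D_diff[OF x]] by simp
  qed
  show "bounded_clinear_op (\<lambda>y. Z (cscale (- 1) y))" by (rule bclin_comp[OF Z bclin_cscale'])
  show "Z (cscale (- 1) y) \<in> D" for y by (rule ZD)
  show "cscale (- \<mu>) (Z (cscale (- 1) y)) - - G (Z (cscale (- 1) y)) = y" for y
    unfolding eq ZL by (simp add: cscale_minus_left)
qed

lemma Rpow_eig: "R x = cscale r x \<Longrightarrow> (R ^^ n) (cscale a x) = cscale (a * r ^ n) x"
proof (induction n arbitrary: a)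
  case 0 then show ?case by simp
next
  case (Suc n)
  have "(R ^^ Suc n) (cscale a x) = R (cscale (a * r ^ n) x)" using Suc by simp
  also have "\<dots> = cscale (a * r ^ Suc n) x"
    using Suc.prems by (simp add: bclin_cscale_comm[OF R_bcl] cscale_mult[symmetric] mult_ac)
  finally show ?case .
qed

lemma Npow_eig: "R x = cscale r x \<Longrightarrow> (N ^^ n) (cscale a x) = cscale (a * (1 - \<eta> * r) ^ n) x"
proof (induction n arbitrary: a)
  case 0 then show ?case by simp
next
  case (Suc n)
  have "(N ^^ Suc n) (cscale a x) = N (cscale (a * (1 - \<eta> * r) ^ n) x)" using Suc by simp
  also have "\<dots> = cscale (a * (1 - \<eta> * r) ^ Suc n) x"
    using Suc.prems
    by (simp add: N_def bclin_cscale_comm[OF R_bcl] cscale_mult[symmetric] cscale_diff_left[symmetric] algebra_simps)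
  finally show ?case .
qed

theorem main:
  assumes t: "\<forall>n. t n \<ge> 0"
    and lim: "(\<lambda>n. onorm (\<lambda>x. T (t n) (((\<lambda>y. - G y) ^^ \<alpha>) ((R ^^ (\<alpha> + \<beta>)) x)))) \<longlonglongrightarrow> 0"
    and \<mu>: "Re \<mu> \<ge> 0" "\<mu> \<noteq> 0"
  shows "- \<mu> \<in> resolvent_set D (\<lambda>y. - G y)"
proof (cases "\<mu> = \<eta>")
  case True
  show ?thesis
  proof (rule main_res[OF R_bcl R_in])
    show "L \<mu> (R y) = y" for y using True R_eq by (simp add: L_def)
    fix x assume "x \<in> D" "L \<mu> x = 0"
    then show "x = 0" using R_left[of x] True bclin_zero_comm[OF R_bcl] by (simp add: L_def)
  qed
next
  case False
  define r where "r = 1 / (\<eta> - \<mu>)"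
  define c where "c = (1 - \<eta> * r) ^ \<alpha> * r ^ \<beta>"
  define S where "S x = (N ^^ \<alpha>) ((R ^^ \<beta>) x)" for x
  have facS: "fac \<mu> c S"
    unfolding c_def S_def[abs_def] r_def using fac_comp[OF fac_pow[OF fac_N[OF False]] fac_pow[OF fac_R[OF False]]] .
  then obtain W where Sb: "bounded_clinear_op S" and W: "bounded_clinear_op W" "\<And>y. W y \<in> D"
     "\<And>y. cscale c y - S y = L \<mu> (W y)"
    unfolding fac_def by blast
  have r0: "r \<noteq> 0" using False by (simp add: r_def)
  have "1 - \<eta> * r = - \<mu> / (\<eta> - \<mu>)" using False by (simp add: r_def field_simps)
  then have "1 - \<eta> * r \<noteq> 0" using \<mu> False by simp
  then have c0: "c \<noteq> 0" using r0 by (simp add: c_def)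
  have "eventually (\<lambda>n. onorm (\<lambda>x. T (t n) (((\<lambda>y. - G y) ^^ \<alpha>) ((R ^^ (\<alpha> + \<beta>)) x))) < cmod c) sequentially"
    using order_tendstoD(2)[OF lim] c0 by simp
  then obtain n where n: "onorm (\<lambda>x. T (t n) (((\<lambda>y. - G y) ^^ \<alpha>) ((R ^^ (\<alpha> + \<beta>)) x))) < cmod c"
    using eventually_sequentially by auto
  define tt where "tt = t n"
  have tt: "tt \<ge> 0" using t by (simp add: tt_def)
  define K where "K x = T tt (S x)" for x
  have Kfun: "(\<lambda>x. T (t n) (((\<lambda>y. - G y) ^^ \<alpha>) ((R ^^ (\<alpha> + \<beta>)) x))) = K"
    by (rule ext) (simp add: K_def S_def tt_def S_eq)
  have Kb: "bounded_clinear_op K" unfolding K_def[abs_def] by (rule bclin_comp[OF sg_bclin[OF C0 tt] Sb])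
  define q where "q = onorm K"
  have q: "q < cmod c" "0 \<le> q" using n Kfun onorm_pos_le[OF bclin_linear[OF Kb]] by (simp_all add: q_def)
  have Kq: "norm (K x) \<le> q * norm x" for x unfolding q_def by (rule onorm[OF bclin_linear[OF Kb]])
  define e where "e = exp (\<mu> * of_real tt)"
  define w where "w = e * c"
  have "cmod e \<ge> 1" using \<mu> tt by (simp add: e_def norm_exp_eq_Re)
  then have "cmod c \<le> cmod w" unfolding w_def norm_mult
    using mult_right_mono[of 1 "cmod e" "cmod c"] by simp
  then have qw: "q < cmod w" using q by simp
  obtain V where V: "bounded_clinear_op V" "\<And>y. cscale w (V y) - K (V y) = y"
    using neumann(1)[OF Kb Kq q(2) qw] by blast
  have inj0: "cscale w x - K x = 0 \<Longrightarrow> x = 0" for x using neumann(2)[OF Kb Kq q(2) qw] by blast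
  define Z where "Z y = cscale e (W (V y)) + Bop T \<mu> tt (S (V y))" for y
  show ?thesis
  proof (rule main_res)
    show "bounded_clinear_op Z" unfolding Z_def[abs_def]
      by (rule bclin_add[OF bclin_cscale[OF bclin_comp[OF W(1) V(1)]] bclin_comp[OF Bop_bclin[OF C0 tt] bclin_comp[OF Sb V(1)]]])
    show "Z y \<in> D" for y unfolding Z_def by (intro D_add D_cscale W(2) B_dom(1)[OF tt])
    show "L \<mu> (Z y) = y" for y
    proof -
      let ?v = "V y"
      have "L \<mu> (Z y) = cscale e (L \<mu> (W ?v)) + L \<mu> (Bop T \<mu> tt (S ?v))"
        unfolding Z_def by (simp add: L_add L_cscale D_cscale W(2) B_dom(1)[OF tt])
      also have "\<dots> = cscale e (cscale c ?v - S ?v) + (cscale e (S ?v) - T tt (S ?v))"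
        by (simp add: W(3)[symmetric] B_dom(2)[OF tt] e_def)
      also have "\<dots> = cscale w ?v - K ?v"
        by (simp add: w_def K_def cscale_diff_right cscale_mult)
      also have "\<dots> = y" by (rule V(2))
      finally show ?thesis .
    qed
    fix x assume x: "x \<in> D" and Lx: "L \<mu> x = 0"
    have Gx: "G x = cscale \<mu> x" using Lx by (simp add: L_def)
    have "x = R (cscale (\<eta> - \<mu>) x)" using R_left[OF x] Gx by (simp add: cscale_diff_left)
    then have "x = cscale (\<eta> - \<mu>) (R x)" by (simp add: bclin_cscale_comm[OF R_bcl])
    then have "cscale r x = cscale (r * (\<eta> - \<mu>)) (R x)" by (metis cscale_mult)
    then have Rx: "R x = cscale r x" using False by (simp add: r_def)
    have Sx: "S x = cscale c x"
      using Npow_eig[OF Rx, of \<alpha> "r ^ \<beta>"] Rpow_eig[OF Rx, of \<beta> 1]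
      by (simp add: S_def c_def mult.commute)
    have "Bop T \<mu> tt (L \<mu> x) = cscale e x - T tt x"
      using Bop_gen[OF C0 tt x] by (simp add: L_def e_def)
    then have Tx: "T tt x = cscale e x" using Lx bclin_zero_comm[OF Bop_bclin[OF C0 tt]] by simp
    have "K x = cscale w x"
      by (simp add: K_def Sx bclin_cscale_comm[OF sg_bclin[OF C0 tt]] Tx w_def cscale_mult mult.commute)
    then show "x = 0" using inj0[of x] by simp
  qed
qed

end

theorem lemma4p18:
  fixes T :: "real \<Rightarrow> 'a::complex_banach \<Rightarrow> 'a"
    and \<alpha> \<beta> :: nat and \<eta> :: complex and t :: "nat \<Rightarrow> real"
  assumes "C0_semigroup T"
    and "\<eta> \<in> resolvent_set (gen_dom T) (gen T)"
    and "\<forall>n. t n \<ge> 0"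
    and "(\<lambda>n. onorm (\<lambda>x. T (t n) (((\<lambda>y. - gen T y) ^^ \<alpha>)
            ((resolvent (gen_dom T) (gen T) \<eta> ^^ (\<alpha> + \<beta>)) x)))) \<longlonglongrightarrow> 0"
  shows "{z. Re z \<le> 0} - {0} \<subseteq> resolvent_set (gen_dom T) (\<lambda>y. - gen T y)"
proof
  interpret SG T \<eta> using assms(1,2) by unfold_locales
  fix z assume "z \<in> {z. Re z \<le> 0} - {0}"
  then have z: "Re (- z) \<ge> 0" "- z \<noteq> 0" by auto
  show "z \<in> resolvent_set (gen_dom T) (\<lambda>y. - gen T y)"
    using main[OF assms(3) assms(4) z] by simp
qed


end
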